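(* Let $\mathbf{AUS}_3$ be the set of density matrices $\sigma$ on $\mathbb{C}^2\otimes\mathbb{C}^2$ such that for every unitary $U$ on $\mathbb{C}^2\otimes\mathbb{C}^2$, every choice of unit vectors $\hat u_1,\hat u_2,\hat u_3\in\mathbb{R}^3$ and every choice of orthonormal vectors $\hat v_1,\hat v_2,\hat v_3\in\mathbb{R}^3$, $$\frac{1}{\sqrt3}\Big|\sum_{i=1}^3\mathrm{Tr}\big(U\sigma U^\dagger\,(\hat u_i\cdot\vec s)\otimes(\hat v_i\cdot\vec s)\big)\Big|\le 1.$$ Write a two-qubit state as $\sigma=\frac14\big(I\otimes I+\vec e\cdot\vec s\otimes I+I\otimes\vec f\cdot\vec s+\sum_{i,j=1}^3 g_{ij}\,s_i\otimes s_j\big)$ with $\vec e,\vec f\in\mathbb{R}^3$ and $G=[g_{ij}]$ a real $3\times3$ matrix. Then $\sigma\in\mathbf{AUS}_3$ if and only if $$\frac14\big(1+\|\vec e\|^2+\|\vec f\|^2+\|G\|^2\big)\le\frac12,$$ where $\|\vec e\|,\|\vec f\|$ are Euclidean norms and $\|G\|^2=\sum_{i,j}g_{ij}^2$.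
   Context: $\vec{s}=(s_1,s_2,s_3)$ denotes the vector of Pauli matrices, and for $\hat w\in\mathbb{R}^3$, $\hat w\cdot\vec s=\sum_k w_k s_k$. $\vec e,\vec f$ are the local Bloch vectors of $\sigma$ and $G$ its correlation matrix. *)

theory Defs
  imports "HOL-Analysis.Analysis"
begin

type_synonym qmat = "complex^2^2"
type_synonym qqmat = "complex^(2\<times>2)^(2\<times>2)"

definition cadj :: "complex^'n^'n \<Rightarrow> complex^'n^'n" where
  "cadj A = (\<chi> i j. cnj (A $ j $ i))"

definition unitary_mat :: "complex^'n^'n \<Rightarrow> bool" where
  "unitary_mat U \<longleftrightarrow> U ** cadj U = mat 1 \<and> cadj U ** U = mat 1"

definition hermitian_mat :: "complex^'n^'n \<Rightarrow> bool" where
  "hermitian_mat A \<longleftrightarrow> cadj A = A"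

definition psd_mat :: "complex^'n^'n \<Rightarrow> bool" where
  "psd_mat A \<longleftrightarrow> (\<forall>v::complex^'n.
     let q = (\<Sum>i\<in>UNIV. cnj (v $ i) * (A *v v) $ i) in Im q = 0 \<and> Re q \<ge> 0)"

definition density_mat :: "complex^'n^'n \<Rightarrow> bool" where
  "density_mat A \<longleftrightarrow> hermitian_mat A \<and> psd_mat A \<and> trace A = 1"

definition kron :: "qmat \<Rightarrow> qmat \<Rightarrow> qqmat" where
  "kron A B = (\<chi> p q. A $ fst p $ fst q * B $ snd p $ snd q)"

text \<open>Pauli matrices s_1, s_2, s_3, indexed by type 3 (index 3 = 0 in type 3).\<close>
definition pauli :: "3 \<Rightarrow> qmat" where
  "pauli k =
    (if k = 1 then (\<chi> i j. if i \<noteq> j then 1 else 0)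
     else if k = 2 then (\<chi> i j. if i = 0 \<and> j = 1 then - \<i> else if i = 1 \<and> j = 0 then \<i> else 0)
     else (\<chi> i j. if i = j then (if i = 0 then 1 else -1) else 0))"

definition bloch :: "real^3 \<Rightarrow> qmat" where
  "bloch w = (\<chi> i j. \<Sum>k\<in>UNIV. complex_of_real (w $ k) * pauli k $ i $ j)"

definition AUS3 :: "qqmat set" where
  "AUS3 = {\<sigma>. density_mat \<sigma> \<and>
     (\<forall>(U::qqmat) (u::3 \<Rightarrow> real^3) (v::3 \<Rightarrow> real^3).
        unitary_mat U \<and> (\<forall>i. norm (u i) = 1) \<and> (\<forall>i. norm (v i) = 1) \<and>
        (\<forall>i j. i \<noteq> j \<longrightarrow> v i \<bullet> v j = 0) \<longrightarrow>
        1 / sqrt 3 * cmod (\<Sum>i\<in>UNIV. trace (U ** \<sigma> ** cadj U ** kron (bloch (u i)) (bloch (v i)))) \<le> 1)}"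

definition two_qubit_repr :: "real^3 \<Rightarrow> real^3 \<Rightarrow> real^3^3 \<Rightarrow> qqmat" where
  "two_qubit_repr e f G =
     (\<chi> a b. (1/4) * (kron (mat 1) (mat 1) $ a $ b + kron (bloch e) (mat 1) $ a $ b
        + kron (mat 1) (bloch f) $ a $ b
        + (\<Sum>i\<in>UNIV. \<Sum>j\<in>UNIV. complex_of_real (G $ i $ j) * kron (pauli i) (pauli j) $ a $ b)))"

end

theory Submission
  imports Defs
begin

lemma sum_22: "sum f (UNIV::(2\<times>2) set) = f(1,1)+f(1,2)+f(2,1)+f(2,2)"
proof -
  have "sum f (UNIV::(2\<times>2) set) = sum f (UNIV \<times> UNIV)" by simp
  also have "\<dots> = (\<Sum>a\<in>UNIV. \<Sum>b\<in>UNIV. f (a,b))"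
    by (simp add: sum.cartesian_product)
  finally show ?thesis by (simp add: sum_2 add.assoc)
qed

lemma sum_opt: "sum (f :: 'a::finite option \<Rightarrow> 'b::comm_monoid_add) UNIV = f None + (\<Sum>k\<in>UNIV. f (Some k))"
proof -
  have "UNIV = insert None (range (Some :: 'a \<Rightarrow> _))" by (rule UNIV_option_conv)
  then have "sum f UNIV = sum f (insert None (range Some))" by simp
  also have "\<dots> = f None + sum f (range Some)" by (subst sum.insert) auto
  also have "sum f (range Some) = (\<Sum>k\<in>UNIV. f (Some k))" by (subst sum.reindex) auto
  finally show ?thesis .
qed

definition pl :: "3 option \<Rightarrow> qmat" where
  "pl a = (case a of None \<Rightarrow> mat 1 | Some k \<Rightarrow> pauli k)"

lemma two_ne: "(1::2) \<noteq> 2" by simp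
lemma pauli_vals:
  "pauli 1 $ 1 $ 1 = 0" "pauli 1 $ 1 $ 2 = 1" "pauli 1 $ 2 $ 1 = 1" "pauli 1 $ 2 $ 2 = 0"
  "pauli 2 $ 1 $ 1 = 0" "pauli 2 $ 1 $ 2 = \<i>" "pauli 2 $ 2 $ 1 = -\<i>" "pauli 2 $ 2 $ 2 = 0"
  "pauli 3 $ 1 $ 1 = -1" "pauli 3 $ 1 $ 2 = 0" "pauli 3 $ 2 $ 1 = 0" "pauli 3 $ 2 $ 2 = 1"
  by (simp_all add: pauli_def)

lemma pl_vals: "pl None = mat 1" "pl (Some k) = pauli k" by (simp_all add: pl_def)

lemma mat1_vals: "(mat 1 :: qmat) $ 1 $ 1 = 1" "(mat 1 :: qmat) $ 1 $ 2 = 0"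
  "(mat 1 :: qmat) $ 2 $ 1 = 0" "(mat 1 :: qmat) $ 2 $ 2 = 1"
  by (simp_all add: mat_def)

lemma opt3_cases: "a = None \<or> a = Some (1::3) \<or> a = Some 2 \<or> a = Some 3"
  using exhaust_3 by (cases a) auto

lemma pl_complete:
  "(\<Sum>a\<in>UNIV. pl a $ q $ p * cnj (pl a $ q' $ p')) = (if q = q' \<and> p = p' then 2 else 0)"
  using exhaust_2[of q] exhaust_2[of p] exhaust_2[of q'] exhaust_2[of p']
  by (auto simp: sum_opt sum_3 pl_vals pauli_vals mat1_vals)

lemma pl_orth:
  "(\<Sum>x\<in>UNIV. \<Sum>y\<in>UNIV. pl a $ x $ y * pl b $ y $ x) = (if a = b then 2 else 0)"
  using opt3_cases[of a] opt3_cases[of b]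
  by (auto simp: sum_2 pl_vals pauli_vals mat1_vals)

lemma pl_herm: "cnj (pl a $ x $ y) = pl a $ y $ x"
  using opt3_cases[of a] exhaust_2[of x] exhaust_2[of y]
  by (auto simp: pl_vals pauli_vals mat1_vals)

definition cc :: "qqmat \<Rightarrow> 3 option \<Rightarrow> 3 option \<Rightarrow> complex" where
  "cc A a b = trace (A ** kron (pl a) (pl b))"

definition fro :: "qqmat \<Rightarrow> real" where
  "fro A = (\<Sum>p\<in>UNIV. \<Sum>q\<in>UNIV. (cmod (A$p$q))\<^sup>2)"

lemma cc_expand: "cc A a b = (\<Sum>p\<in>UNIV. \<Sum>q\<in>UNIV. A$p$q * (pl a $ fst q $ fst p * pl b $ snd q $ snd p))"
  by (simp add: cc_def trace_def matrix_matrix_mult_def kron_def)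

lemma gram_sum:
  fixes x :: "'z \<Rightarrow> complex" and k :: "'a \<Rightarrow> 'z \<Rightarrow> complex"
  shows "(\<Sum>a\<in>A. (\<Sum>z\<in>Z. x z * k a z) * cnj (\<Sum>w\<in>Z. x w * k a w))
       = (\<Sum>z\<in>Z. \<Sum>w\<in>Z. x z * cnj (x w) * (\<Sum>a\<in>A. k a z * cnj (k a w)))"
proof -
  have "(\<Sum>a\<in>A. (\<Sum>z\<in>Z. x z * k a z) * cnj (\<Sum>w\<in>Z. x w * k a w))
     = (\<Sum>a\<in>A. \<Sum>z\<in>Z. \<Sum>w\<in>Z. x z * k a z * (cnj (x w) * cnj (k a w)))"
    by (simp add: sum_product cnj_sum)
  also have "\<dots> = (\<Sum>z\<in>Z. \<Sum>a\<in>A. \<Sum>w\<in>Z. x z * k a z * (cnj (x w) * cnj (k a w)))"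
    by (rule sum.swap)
  also have "\<dots> = (\<Sum>z\<in>Z. \<Sum>w\<in>Z. \<Sum>a\<in>A. x z * k a z * (cnj (x w) * cnj (k a w)))"
    by (rule sum.cong[OF refl], rule sum.swap)
  also have "\<dots> = (\<Sum>z\<in>Z. \<Sum>w\<in>Z. x z * cnj (x w) * (\<Sum>a\<in>A. k a z * cnj (k a w)))"
    by (simp add: sum_distrib_left mult_ac)
  finally show ?thesis .
qed

lemma sum_pairs: "(\<Sum>a\<in>UNIV. \<Sum>b\<in>UNIV. f a b) = (\<Sum>z\<in>(UNIV::('a::finite\<times>'b::finite) set). f (fst z) (snd z))"
proof -
  have "(\<Sum>a\<in>UNIV. \<Sum>b\<in>UNIV. f a b) = (\<Sum>z\<in>(UNIV \<times> UNIV::('a\<times>'b) set). f (fst z) (snd z))"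
    by (simp add: sum.cartesian_product case_prod_beta)
  then show ?thesis by simp
qed

lemma parseval:
  "(\<Sum>a\<in>UNIV. \<Sum>b\<in>UNIV. (cmod (cc A a b))\<^sup>2) = 4 * fro A"
proof -
  define x :: "(2\<times>2)\<times>(2\<times>2) \<Rightarrow> complex" where "x z = A $ fst z $ snd z" for z
  define k :: "3 option \<times> 3 option \<Rightarrow> (2\<times>2)\<times>(2\<times>2) \<Rightarrow> complex" where
    "k ab z = pl (fst ab) $ fst (snd z) $ fst (fst z) * pl (snd ab) $ snd (snd z) $ snd (fst z)" for ab z
  have ccx: "cc A (fst ab) (snd ab) = (\<Sum>z\<in>UNIV. x z * k ab z)" for ab
    unfolding cc_expand sum_pairs x_def k_def ..
  have kk: "(\<Sum>ab\<in>UNIV. k ab z * cnj (k ab w)) = (if z = w then 4 else 0)" for z w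
  proof -
    have "(\<Sum>ab\<in>UNIV. k ab z * cnj (k ab w)) =
      (\<Sum>a\<in>UNIV. \<Sum>b\<in>UNIV. (pl a $ fst (snd z) $ fst (fst z) * cnj (pl a $ fst (snd w) $ fst (fst w)))
         * (pl b $ snd (snd z) $ snd (fst z) * cnj (pl b $ snd (snd w) $ snd (fst w))))"
      unfolding sum_pairs k_def by (simp add: mult_ac)
    also have "\<dots> = (\<Sum>a\<in>UNIV. pl a $ fst (snd z) $ fst (fst z) * cnj (pl a $ fst (snd w) $ fst (fst w)))
         * (\<Sum>b\<in>UNIV. pl b $ snd (snd z) $ snd (fst z) * cnj (pl b $ snd (snd w) $ snd (fst w)))"
      by (simp add: sum_product)
    also have "\<dots> = (if z = w then 4 else 0)"
      unfolding pl_complete by (auto simp: prod_eq_iff)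
    finally show ?thesis .
  qed
  have "complex_of_real (\<Sum>a\<in>UNIV. \<Sum>b\<in>UNIV. (cmod (cc A a b))\<^sup>2)
      = (\<Sum>ab\<in>UNIV. cc A (fst ab) (snd ab) * cnj (cc A (fst ab) (snd ab)))"
    unfolding sum_pairs by (simp add: complex_norm_square[symmetric])
  also have "\<dots> = (\<Sum>ab\<in>UNIV. (\<Sum>z\<in>UNIV. x z * k ab z) * cnj (\<Sum>w\<in>UNIV. x w * k ab w))"
    by (simp add: ccx)
  also have "\<dots> = (\<Sum>z\<in>UNIV. \<Sum>w\<in>UNIV. x z * cnj (x w) * (if z = w then 4 else 0))"
    unfolding gram_sum kk ..
  also have "\<dots> = (\<Sum>z\<in>UNIV. 4 * (x z * cnj (x z)))"
    by (simp add: if_distrib mult_ac cong: if_cong)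
  also have "\<dots> = complex_of_real (4 * fro A)"
    unfolding fro_def sum_pairs x_def by (simp add: complex_norm_square[symmetric] sum_distrib_left)
  finally show ?thesis by (simp only: of_real_eq_iff)
qed

definition coef :: "real^3 \<Rightarrow> real^3 \<Rightarrow> real^3^3 \<Rightarrow> 3 option \<Rightarrow> 3 option \<Rightarrow> complex" where
  "coef e f G a b = (case a of None \<Rightarrow> (case b of None \<Rightarrow> 1 | Some k \<Rightarrow> of_real (f$k))
     | Some j \<Rightarrow> (case b of None \<Rightarrow> of_real (e$j) | Some k \<Rightarrow> of_real (G$j$k)))"

lemma repr_expand:
  "two_qubit_repr e f G $ x $ y =
    (1/4) * (\<Sum>a\<in>UNIV. \<Sum>b\<in>UNIV. coef e f G a b * (pl a $ fst x $ fst y * pl b $ snd x $ snd y))"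
  by (simp add: two_qubit_repr_def kron_def bloch_def sum_opt coef_def pl_vals
      sum_distrib_left sum_distrib_right algebra_simps sum.distrib)

lemma sum_fact22:
  fixes \<alpha> \<beta> :: "2 \<Rightarrow> 2 \<Rightarrow> complex"
  shows "(\<Sum>p\<in>UNIV. \<Sum>q\<in>UNIV. \<alpha> (fst p) (fst q) * \<beta> (snd p) (snd q))
    = (\<Sum>p\<in>UNIV. \<Sum>q\<in>UNIV. \<alpha> p q) * (\<Sum>p\<in>UNIV. \<Sum>q\<in>UNIV. \<beta> p q)"
  by (simp add: sum_22 sum_2 algebra_simps)

lemma sum_swap4: "(\<Sum>p\<in>P. \<Sum>q\<in>Q. \<Sum>c\<in>C. \<Sum>d\<in>D. F p q c d) = (\<Sum>c\<in>C. \<Sum>d\<in>D. \<Sum>p\<in>P. \<Sum>q\<in>Q. F p q c d)"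
proof -
  have "(\<Sum>p\<in>P. \<Sum>q\<in>Q. \<Sum>c\<in>C. \<Sum>d\<in>D. F p q c d) = (\<Sum>p\<in>P. \<Sum>c\<in>C. \<Sum>q\<in>Q. \<Sum>d\<in>D. F p q c d)"
    by (intro sum.cong refl sum.swap)
  also have "\<dots> = (\<Sum>c\<in>C. \<Sum>p\<in>P. \<Sum>q\<in>Q. \<Sum>d\<in>D. F p q c d)"
    by (rule sum.swap)
  also have "\<dots> = (\<Sum>c\<in>C. \<Sum>p\<in>P. \<Sum>d\<in>D. \<Sum>q\<in>Q. F p q c d)"
    by (intro sum.cong refl sum.swap)
  also have "\<dots> = (\<Sum>c\<in>C. \<Sum>d\<in>D. \<Sum>p\<in>P. \<Sum>q\<in>Q. F p q c d)"
    by (intro sum.cong refl sum.swap)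
  finally show ?thesis .
qed

lemma cc_repr: "cc (two_qubit_repr e f G) a b = coef e f G a b"
proof -
  have "cc (two_qubit_repr e f G) a b =
    (\<Sum>p\<in>UNIV. \<Sum>q\<in>UNIV. (1/4) * (\<Sum>c\<in>UNIV. \<Sum>d\<in>UNIV. coef e f G c d *
        ((pl c $ fst p $ fst q * pl a $ fst q $ fst p) * (pl d $ snd p $ snd q * pl b $ snd q $ snd p))))"
    unfolding cc_expand repr_expand
    by (simp add: sum_distrib_left sum_distrib_right mult_ac)
  also have "\<dots> = (1/4) * (\<Sum>c\<in>UNIV. \<Sum>d\<in>UNIV. coef e f G c d *
       (\<Sum>p\<in>UNIV. \<Sum>q\<in>UNIV. (pl c $ fst p $ fst q * pl a $ fst q $ fst p) * (pl d $ snd p $ snd q * pl b $ snd q $ snd p)))"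
    unfolding sum_distrib_left by (rule sum_swap4)
  also have "\<dots> = (1/4) * (\<Sum>c\<in>UNIV. \<Sum>d\<in>UNIV. coef e f G c d *
       ((if c = a then 2 else 0) * (if d = b then 2 else 0)))"
  proof -
    have "(\<Sum>p\<in>UNIV. \<Sum>q\<in>UNIV. (pl c $ fst p $ fst q * pl a $ fst q $ fst p) * (pl d $ snd p $ snd q * pl b $ snd q $ snd p))
      = (if c = a then 2 else 0) * (if d = b then 2 else 0)" for c d
      using sum_fact22[of "\<lambda>x y. pl c $ x $ y * pl a $ y $ x" "\<lambda>x y. pl d $ x $ y * pl b $ y $ x"]
      by (simp add: pl_orth)
    then show ?thesis by simp
  qed
  also have "\<dots> = coef e f G a b"
  proof -
    have h: "coef e f G c d * ((if c = a then 2 else 0) * (if d = b then 2 else 0)) =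
      (if d = b then (if c = a then 4 * coef e f G a b else 0) else 0)" for c d by auto
    show ?thesis by (simp add: h)
  qed
  finally show ?thesis .
qed

lemma norm_sq_vec3: "(norm (e::real^3))\<^sup>2 = (\<Sum>k\<in>UNIV. (e$k)\<^sup>2)"
  by (simp add: norm_vec_def L2_set_def sum_nonneg)

lemma fro_repr: "4 * fro (two_qubit_repr e f G) =
   1 + (norm e)\<^sup>2 + (norm f)\<^sup>2 + (\<Sum>i\<in>UNIV. \<Sum>j\<in>UNIV. (G $ i $ j)\<^sup>2)"
  unfolding parseval[symmetric] cc_repr norm_sq_vec3
  by (simp add: sum_opt coef_def sum.distrib)

lemma cadj_mult: "cadj (A ** B) = cadj B ** (cadj A :: complex^'n^'n)"
  by (simp add: vec_eq_iff cadj_def matrix_matrix_mult_def cnj_sum mult.commute)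

lemma cadj_cadj: "cadj (cadj A) = A"
  by (simp add: vec_eq_iff cadj_def)

lemma trace_AAdag: "trace (A ** cadj A) = complex_of_real (fro A)"
  by (simp add: trace_def matrix_matrix_mult_def cadj_def fro_def complex_norm_square[symmetric])

lemma trace_unitary:
  assumes "unitary_mat U"
  shows "trace (U ** A ** cadj U) = trace (A :: complex^'n^'n)"
proof -
  have "trace (U ** A ** cadj U) = trace (cadj U ** (U ** A))"
    by (rule trace_mul_sym)
  also have "\<dots> = trace A"
    using assms by (simp add: unitary_mat_def matrix_mul_assoc)
  finally show ?thesis .
qed

lemma fro_unitary:
  assumes "unitary_mat U"
  shows "fro (U ** A ** cadj U) = fro A"
proof -
  have "(U ** A ** cadj U) ** cadj (U ** A ** cadj U) = U ** (A ** cadj A) ** cadj U"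
  proof -
    have c: "cadj (U ** A ** cadj U) = U ** cadj A ** cadj U"
      by (simp add: cadj_mult cadj_cadj matrix_mul_assoc)
    have "(U ** A ** cadj U) ** (U ** cadj A ** cadj U) = U ** A ** (cadj U ** U) ** cadj A ** cadj U"
      by (simp add: matrix_mul_assoc)
    also have "\<dots> = U ** (A ** cadj A) ** cadj U"
      using assms by (simp add: unitary_mat_def matrix_mul_assoc)
    finally show ?thesis unfolding c .
  qed
  then have "complex_of_real (fro (U ** A ** cadj U)) = complex_of_real (fro A)"
    using trace_unitary[OF assms, of "A ** cadj A"] by (simp add: trace_AAdag[symmetric])
  then show ?thesis by simp
qed

lemma trace_bloch:
  "trace (R ** kron (bloch u) (bloch v)) =
     (\<Sum>j\<in>UNIV. \<Sum>k\<in>UNIV. complex_of_real (u$j * v$k) * cc R (Some j) (Some k))"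
proof -
  have "trace (R ** kron (bloch u) (bloch v)) =
    (\<Sum>p\<in>UNIV. \<Sum>q\<in>UNIV. R $ p $ q * ((\<Sum>j\<in>UNIV. complex_of_real (u $ j) * pauli j $ fst q $ fst p)
       * (\<Sum>k\<in>UNIV. complex_of_real (v $ k) * pauli k $ snd q $ snd p)))"
    by (simp add: trace_def matrix_matrix_mult_def kron_def bloch_def)
  also have "\<dots> = (\<Sum>p\<in>UNIV. \<Sum>q\<in>UNIV. \<Sum>j\<in>UNIV. \<Sum>k\<in>UNIV. complex_of_real (u$j * v$k) *
        (R$p$q * (pl (Some j) $ fst q $ fst p * pl (Some k) $ snd q $ snd p)))"
    by (intro sum.cong refl) (simp add: sum_product sum_distrib_left pl_vals mult_ac, subst sum.swap, simp add: mult_ac)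
  also have "\<dots> = (\<Sum>j\<in>UNIV. \<Sum>k\<in>UNIV. \<Sum>p\<in>UNIV. \<Sum>q\<in>UNIV. complex_of_real (u$j * v$k) *
        (R$p$q * (pl (Some j) $ fst q $ fst p * pl (Some k) $ snd q $ snd p)))"
    by (rule sum_swap4)
  also have "\<dots> = (\<Sum>j\<in>UNIV. \<Sum>k\<in>UNIV. complex_of_real (u$j * v$k) * cc R (Some j) (Some k))"
    unfolding cc_expand sum_distrib_left ..
  finally show ?thesis .
qed

lemma cols_orth:
  fixes v :: "3 \<Rightarrow> real^3"
  assumes n: "\<forall>i. norm (v i) = 1" and o: "\<forall>i j. i \<noteq> j \<longrightarrow> v i \<bullet> v j = 0"
  shows "(\<Sum>i\<in>UNIV. v i $ k * v i $ l) = (if k = l then 1 else 0)"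
proof -
  define Vm :: "real^3^3" where "Vm = (\<chi> i k. v i $ k)"
  have "Vm ** transpose Vm = mat 1"
  proof -
    have "(\<Sum>k\<in>UNIV. v i $ k * v j $ k) = (if i = j then 1 else 0)" for i j
    proof (cases "i = j")
      case True
      have "v i \<bullet> v i = 1" using n norm_eq_1 by blast
      then show ?thesis using True by (simp add: inner_vec_def)
    next
      case False
      then show ?thesis using o by (simp add: inner_vec_def)
    qed
    then show ?thesis
      by (simp add: vec_eq_iff Vm_def matrix_matrix_mult_def transpose_def mat_def)
  qed
  then have "transpose Vm ** Vm = mat 1" by (simp add: matrix_left_right_inverse)
  then have "(transpose Vm ** Vm) $ k $ l = mat 1 $ k $ l" by simp
  then show ?thesis by (simp add: Vm_def matrix_matrix_mult_def transpose_def mat_def)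
qed

lemma bessel3:
  fixes v :: "3 \<Rightarrow> real^3" and z :: "3 \<Rightarrow> complex"
  assumes n: "\<forall>i. norm (v i) = 1" and o: "\<forall>i j. i \<noteq> j \<longrightarrow> v i \<bullet> v j = 0"
  shows "(\<Sum>i\<in>UNIV. (cmod (\<Sum>k\<in>UNIV. z k * complex_of_real (v i $ k)))\<^sup>2) = (\<Sum>k\<in>UNIV. (cmod (z k))\<^sup>2)"
proof -
  have "complex_of_real (\<Sum>i\<in>UNIV. (cmod (\<Sum>k\<in>UNIV. z k * complex_of_real (v i $ k)))\<^sup>2)
     = (\<Sum>i\<in>UNIV. (\<Sum>k\<in>UNIV. z k * complex_of_real (v i $ k)) * cnj (\<Sum>l\<in>UNIV. z l * complex_of_real (v i $ l)))"
    by (simp only: of_real_sum complex_norm_square)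
  also have "\<dots> = (\<Sum>k\<in>UNIV. \<Sum>l\<in>UNIV. z k * cnj (z l) *
       (\<Sum>i\<in>UNIV. complex_of_real (v i $ k) * cnj (complex_of_real (v i $ l))))"
    by (rule gram_sum)
  also have "\<dots> = (\<Sum>k\<in>UNIV. \<Sum>l\<in>UNIV. z k * cnj (z l) * (if k = l then 1 else 0))"
  proof -
    have "(\<Sum>i\<in>UNIV. complex_of_real (v i $ k) * cnj (complex_of_real (v i $ l))) = (if k = l then 1 else 0)" for k l
      using cols_orth[OF n o, of k l] by (simp flip: of_real_mult of_real_sum)
    then show ?thesis by simp
  qed
  also have "\<dots> = complex_of_real (\<Sum>k\<in>UNIV. (cmod (z k))\<^sup>2)"
    by (simp add: complex_norm_square[symmetric] if_distrib cong: if_cong)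
  finally show ?thesis by (simp only: of_real_eq_iff)
qed

lemma cc_NN: "cc R None None = trace R"
proof -
  have "kron (pl None) (pl None) = mat 1"
    by (simp add: vec_eq_iff kron_def pl_vals mat_def prod_eq_iff)
  then show ?thesis by (simp add: cc_def)
qed

lemma aus_bound:
  fixes u v :: "3 \<Rightarrow> real^3"
  assumes fro: "4 * fro R \<le> 2" and tr: "trace R = 1"
    and un: "\<forall>i. norm (u i) = 1"
    and n: "\<forall>i. norm (v i) = 1" and o: "\<forall>i j. i \<noteq> j \<longrightarrow> v i \<bullet> v j = 0"
  shows "cmod (\<Sum>i\<in>UNIV. \<Sum>j\<in>UNIV. \<Sum>k\<in>UNIV. complex_of_real (u i $ j * v i $ k) * cc R (Some j) (Some k)) \<le> sqrt 3"
proof -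
  define C where "C j k = cc R (Some j) (Some k)" for j k
  define w where "w i j = (\<Sum>k\<in>UNIV. C j k * complex_of_real (v i $ k))" for i j
  define nn where "nn i = sqrt (\<Sum>j\<in>UNIV. (cmod (w i j))\<^sup>2)" for i
  have S: "(\<Sum>j\<in>UNIV. \<Sum>k\<in>UNIV. (cmod (C j k))\<^sup>2) \<le> 1"
  proof -
    have "(\<Sum>a\<in>UNIV. \<Sum>b\<in>UNIV. (cmod (cc R a b))\<^sup>2) \<le> 2" using parseval[of R] fro by simp
    then have "1 + (\<Sum>j\<in>UNIV. (cmod (cc R (Some j) None))\<^sup>2) + (\<Sum>k\<in>UNIV. (cmod (cc R None (Some k)))\<^sup>2)
        + (\<Sum>j\<in>UNIV. \<Sum>k\<in>UNIV. (cmod (C j k))\<^sup>2) \<le> 2"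
      by (simp add: sum_opt cc_NN tr C_def sum.distrib)
    moreover have "0 \<le> (\<Sum>j\<in>UNIV. (cmod (cc R (Some j) None))\<^sup>2)" "0 \<le> (\<Sum>k\<in>UNIV. (cmod (cc R None (Some k)))\<^sup>2)"
      by (simp_all add: sum_nonneg)
    ultimately show ?thesis by linarith
  qed
  have expr: "(\<Sum>i\<in>UNIV. \<Sum>j\<in>UNIV. \<Sum>k\<in>UNIV. complex_of_real (u i $ j * v i $ k) * cc R (Some j) (Some k))
     = (\<Sum>i\<in>UNIV. \<Sum>j\<in>UNIV. complex_of_real (u i $ j) * w i j)"
    by (simp add: w_def C_def sum_distrib_left mult_ac)
  have step1: "cmod (\<Sum>j\<in>UNIV. complex_of_real (u i $ j) * w i j) \<le> nn i" for i
  proof -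
    have "cmod (\<Sum>j\<in>UNIV. complex_of_real (u i $ j) * w i j) \<le> (\<Sum>j\<in>UNIV. cmod (complex_of_real (u i $ j) * w i j))"
      by (rule norm_sum)
    also have "\<dots> = (\<Sum>j\<in>UNIV. \<bar>u i $ j\<bar> * \<bar>cmod (w i j)\<bar>)"
      by (simp add: norm_mult)
    also have "\<dots> \<le> L2_set (\<lambda>j. u i $ j) UNIV * L2_set (\<lambda>j. cmod (w i j)) UNIV"
      by (rule L2_set_mult_ineq)
    also have "\<dots> = nn i"
      using un by (simp add: norm_vec_def nn_def L2_set_def)
    finally show ?thesis .
  qed
  have step2: "(\<Sum>i\<in>UNIV. nn i) \<le> sqrt 3 * sqrt (\<Sum>i\<in>UNIV. (nn i)\<^sup>2)"
  proof -
    have "(\<Sum>i\<in>UNIV. nn i) = (\<Sum>i\<in>(UNIV::3 set). \<bar>1::real\<bar> * \<bar>nn i\<bar>)"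
      by (simp add: nn_def sum_nonneg)
    also have "\<dots> \<le> L2_set (\<lambda>i::3. 1::real) UNIV * L2_set nn UNIV"
      using L2_set_mult_ineq[of "\<lambda>i. (1::real)" nn UNIV] by simp
    also have "\<dots> = sqrt 3 * sqrt (\<Sum>i\<in>UNIV. (nn i)\<^sup>2)"
      by (simp add: L2_set_def)
    finally show ?thesis .
  qed
  have step3: "(\<Sum>i\<in>UNIV. (nn i)\<^sup>2) = (\<Sum>j\<in>UNIV. \<Sum>k\<in>UNIV. (cmod (C j k))\<^sup>2)"
  proof -
    have "(\<Sum>i\<in>UNIV. (nn i)\<^sup>2) = (\<Sum>i\<in>UNIV. \<Sum>j\<in>UNIV. (cmod (w i j))\<^sup>2)"
      by (simp add: nn_def sum_nonneg)
    also have "\<dots> = (\<Sum>j\<in>UNIV. \<Sum>i\<in>UNIV. (cmod (w i j))\<^sup>2)" by (rule sum.swap)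
    also have "\<dots> = (\<Sum>j\<in>UNIV. \<Sum>k\<in>UNIV. (cmod (C j k))\<^sup>2)"
      unfolding w_def using bessel3[OF n o] by simp
    finally show ?thesis .
  qed
  have "cmod (\<Sum>i\<in>UNIV. \<Sum>j\<in>UNIV. complex_of_real (u i $ j) * w i j) \<le> (\<Sum>i\<in>UNIV. nn i)"
    by (rule order_trans[OF norm_sum sum_mono]) (rule step1)
  also have "\<dots> \<le> sqrt 3 * sqrt (\<Sum>i\<in>UNIV. (nn i)\<^sup>2)" by (rule step2)
  also have "\<dots> \<le> sqrt 3 * 1"
    using S step3 by (simp add: real_sqrt_le_1_iff)
  finally show ?thesis using expr by simp
qed

definition cinner :: "complex^'n \<Rightarrow> complex^'n \<Rightarrow> complex" where
  "cinner x y = (\<Sum>i\<in>UNIV. cnj (x$i) * y$i)"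

lemma Re_cinner: "Re (cinner x y) = x \<bullet> y"
  by (simp add: cinner_def inner_vec_def inner_complex_def Re_sum)

lemma cinner_swap: "cinner y x = cnj (cinner x y)"
  by (simp add: cinner_def cnj_sum mult.commute)

lemma cinner_adj: "cinner x (A *v y) = cinner (cadj A *v x) y"
proof -
  have "cinner x (A *v y) = (\<Sum>i\<in>UNIV. \<Sum>j\<in>UNIV. cnj (x$i) * (A$i$j * y$j))"
    by (simp add: cinner_def matrix_vector_mult_def sum_distrib_left)
  also have "\<dots> = (\<Sum>j\<in>UNIV. \<Sum>i\<in>UNIV. cnj (x$i) * (A$i$j * y$j))" by (rule sum.swap)
  also have "\<dots> = cinner (cadj A *v x) y"
    by (simp add: cinner_def matrix_vector_mult_def cadj_def sum_distrib_right sum_distrib_left mult_ac)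
  finally show ?thesis .
qed

lemma cinner_add_right: "cinner x (y + z) = cinner x y + cinner x z"
  by (simp add: cinner_def distrib_left sum.distrib)
lemma cinner_add_left: "cinner (x + y) z = cinner x z + cinner y z"
  by (simp add: cinner_def distrib_right sum.distrib)
lemma cinner_diff_right: "cinner x (y - z) = cinner x y - cinner x z"
  by (simp add: cinner_def right_diff_distrib sum_subtractf)
lemma cinner_smult_right: "cinner x (c *s y) = c * cinner x y"
  by (simp add: cinner_def sum_distrib_left mult_ac)
lemma cinner_smult_left: "cinner (c *s x) y = cnj c * cinner x y"
  by (simp add: cinner_def sum_distrib_left mult_ac)
lemma cinner_scaleR_right: "cinner x (c *\<^sub>R y) = of_real c * cinner x y"
  unfolding cinner_def vector_scaleR_component by (simp add: scaleR_conv_of_real sum_distrib_left mult_ac)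
lemma cinner_scaleR_left: "cinner (c *\<^sub>R x) y = of_real c * cinner x y"
  unfolding cinner_def vector_scaleR_component by (simp add: scaleR_conv_of_real sum_distrib_left mult_ac)
lemma cinner_self: "cinner x x = of_real (x \<bullet> x)"
proof -
  have "Im (cinner x x) = 0" by (simp add: cinner_def Im_sum)
  then show ?thesis using Re_cinner[of x x] by (simp add: complex_eq_iff)
qed
lemma Im_cinner: "Im (cinner x y) = (\<i> *s x) \<bullet> y"
proof -
  have "(\<i> *s x) \<bullet> y = Re (cinner (\<i> *s x) y)" by (simp add: Re_cinner)
  also have "\<dots> = Im (cinner x y)" by (simp add: cinner_smult_left)
  finally show ?thesis by simp
qed

lemma cinner_zero_iff: "cinner f x = 0 \<longleftrightarrow> f \<bullet> x = 0 \<and> (\<i> *s f) \<bullet> x = 0"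
  by (simp add: complex_eq_iff Re_cinner Im_cinner)

lemma mv_scaleR: "(A::complex^'n^'m) *v (c *\<^sub>R x) = c *\<^sub>R (A *v x)"
  by (simp add: vec_eq_iff matrix_vector_mult_def scaleR_sum_right)

lemma eig_step:
  fixes A :: "complex^'n^'n" and F :: "(complex^'n) set"
  assumes herm: "cadj A = A" and fin: "finite F" and card: "card F < CARD('n)"
    and eig: "\<forall>f\<in>F. \<exists>c. A *v f = c *s f"
  shows "\<exists>v. cinner v v = 1 \<and> (\<forall>f\<in>F. cinner f v = 0) \<and> A *v v = cinner v (A *v v) *s v
            \<and> Im (cinner v (A *v v)) = 0"
proof -
  define S where "S = {x. \<forall>f\<in>F. cinner f x = 0}"
  define Fs where "Fs = F \<union> (\<lambda>f. \<i> *s f) ` F"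
  have S_eq: "S = (\<Inter>y\<in>Fs. {x. y \<bullet> x = 0})"
    using cinner_zero_iff by (auto simp: S_def Fs_def)
  have clS: "closed S" unfolding S_eq by (intro closed_INT ballI closed_hyperplane)
  have S_lin: "x + t *\<^sub>R y \<in> S" if "x \<in> S" "y \<in> S" for x y t
    using that by (simp add: S_def cinner_add_right cinner_scaleR_right)
  have S_scale: "t *\<^sub>R x \<in> S" if "x \<in> S" for x t
    using that by (simp add: S_def cinner_scaleR_right)
  have "dim Fs \<le> card Fs" using fin by (simp add: Fs_def dim_le_card')
  also have "card Fs \<le> card F + card F"
    unfolding Fs_def by (rule order_trans[OF card_Un_le]) (simp add: card_image_le fin)
  also have "\<dots> < DIM(complex^'n)" using card by simp
  finally have dimFs: "dim Fs < DIM(complex^'n)" .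
  obtain x0 :: "complex^'n" where x0: "x0 \<noteq> 0" "\<And>y. y \<in> span Fs \<Longrightarrow> orthogonal x0 y"
    using orthogonal_to_subspace_exists[OF dimFs] by blast
  have x0S: "x0 \<in> S"
    unfolding S_eq using x0(2) span_base by (fastforce simp: orthogonal_def inner_commute)
  define T where "T = S \<inter> sphere 0 1"
  have x1T: "x0 /\<^sub>R norm x0 \<in> T"
    using x0S x0(1) S_scale by (simp add: T_def)
  have cT: "compact T" unfolding T_def by (rule closed_Int_compact[OF clS compact_sphere])
  define q where "q x = x \<bullet> (A *v x)" for x
  have contq: "continuous_on T q" unfolding q_def by (intro continuous_intros)
  obtain v where vT: "v \<in> T" and vmax: "\<And>y. y \<in> T \<Longrightarrow> q y \<le> q v"
    using continuous_attains_sup[OF cT _ contq] x1T by blast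
  have vS: "v \<in> S" and nv: "norm v = 1" using vT by (auto simp: T_def)
  have vv: "v \<bullet> v = 1" using nv by (simp add: norm_eq_1)
  have cvv: "cinner v v = 1" using vv by (simp add: cinner_self)
  define \<mu> where "\<mu> = cinner v (A *v v)"
  define r where "r = A *v v - \<mu> *s v"
  have Af: "cinner f (A *v v) = 0" if "f \<in> F" for f
  proof -
    from bspec[OF eig that] obtain c where c: "A *v f = c *s f" by (rule exE)
    have "cinner f (A *v v) = cinner (A *v f) v" using cinner_adj[of f A v] herm by simp
    also have "\<dots> = 0" using vS that by (simp add: c cinner_smult_left S_def)
    finally show ?thesis .
  qed
  have rS: "r \<in> S" using vS Af by (simp add: S_def r_def cinner_diff_right cinner_smult_right)
  have vr: "cinner v r = 0" by (simp add: r_def cinner_diff_right cinner_smult_right cvv \<mu>_def)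
  have rv: "cinner r v = 0" using vr cinner_swap[of r v] by simp
  have Av: "A *v v = r + \<mu> *s v" by (simp add: r_def)
  have rAv: "cinner r (A *v v) = cinner r r"
    by (simp add: Av cinner_add_right cinner_smult_right rv)
  have vAr: "cinner v (A *v r) = cinner r r"
  proof -
    have "cinner v (A *v r) = cinner (A *v v) r" using cinner_adj[of v A r] herm by simp
    also have "\<dots> = cinner r r" by (simp add: Av cinner_add_left cinner_smult_left vr)
    finally show ?thesis .
  qed
  define s where "s = r \<bullet> r"
  have s0: "s \<ge> 0" by (simp add: s_def)
  have crr: "cinner r r = of_real s" by (simp add: s_def cinner_self)
  have ineq: "2 * t * s \<le> t\<^sup>2 * (s * q v - q r)" if t: "t > 0" for t
  proof -
    define x where "x = v + t *\<^sub>R r"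
    have xS: "x \<in> S" using S_lin[OF vS rS] by (simp add: x_def)
    have cxx: "cinner x x = 1 + of_real (t\<^sup>2 * s)"
      by (simp add: x_def cinner_add_left cinner_add_right cinner_scaleR_left cinner_scaleR_right
          cvv vr rv crr power2_eq_square)
    have xx: "x \<bullet> x = 1 + t\<^sup>2 * s"
      using cxx Re_cinner[of x x] by simp
    have qx: "q x = q v + 2 * t * s + t\<^sup>2 * q r"
    proof -
      have "cinner x (A *v x) = cinner v (A *v v) + of_real t * cinner v (A *v r)
          + of_real t * cinner r (A *v v) + of_real t * of_real t * cinner r (A *v r)"
        by (simp add: x_def matrix_vector_right_distrib mv_scaleR cinner_add_left cinner_add_right
            cinner_scaleR_left cinner_scaleR_right algebra_simps)
      then have "Re (cinner x (A *v x)) = Re (cinner v (A *v v)) + t * s + t * s + t * t * Re (cinner r (A *v r))"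
        by (simp add: vAr rAv crr)
      then show ?thesis by (simp add: q_def Re_cinner power2_eq_square)
    qed
    have "x \<bullet> x > 0" using xx s0 by (simp add: add_pos_nonneg)
    then have "x \<noteq> 0" by auto
    then have npos: "norm x > 0" by simp
    have nx2: "(norm x)\<^sup>2 = 1 + t\<^sup>2 * s" using xx by (simp add: power2_norm_eq_inner)
    have yT: "x /\<^sub>R norm x \<in> T" using xS S_scale npos by (simp add: T_def)
    have "q (x /\<^sub>R norm x) = q x / (norm x)\<^sup>2"
      by (simp add: q_def mv_scaleR power2_eq_square divide_inverse)
    then have "q x / (norm x)\<^sup>2 \<le> q v" using vmax[OF yT] by simp
    then have "q x \<le> q v * (norm x)\<^sup>2" using npos by (simp add: divide_le_eq)
    then have "q v + 2 * t * s + t\<^sup>2 * q r \<le> q v * (1 + t\<^sup>2 * s)" using qx nx2 by simp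
    then show ?thesis by (simp add: algebra_simps)
  qed
  have "s = 0"
  proof (rule ccontr)
    assume "s \<noteq> 0"
    then have sp: "s > 0" using s0 by simp
    define K where "K = s * q v - q r"
    define t where "t = s / (\<bar>K\<bar> + 1)"
    have tp: "t > 0" using sp by (simp add: t_def)
    have "2 * t * s \<le> t\<^sup>2 * K" using ineq[OF tp] by (simp add: K_def)
    then have "2 * s \<le> t * K" using tp by (simp add: power2_eq_square mult.assoc)
    also have "\<dots> \<le> t * \<bar>K\<bar>" using tp by (simp add: mult_left_mono)
    also have "\<dots> < s"
    proof -
      have "t * \<bar>K\<bar> = s * (\<bar>K\<bar> / (\<bar>K\<bar> + 1))" by (simp add: t_def)
      also have "\<dots> < s * 1" using sp by (intro mult_strict_left_mono) auto
      finally show ?thesis by simp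
    qed
    finally show False using sp by simp
  qed
  then have "r = 0" by (simp add: s_def)
  then have eigv: "A *v v = \<mu> *s v" by (simp add: r_def)
  have "\<mu> = cnj \<mu>"
  proof -
    have "\<mu> = cinner (A *v v) v" using cinner_adj[of v A v] herm by (simp add: \<mu>_def)
    also have "\<dots> = cnj \<mu>" by (simp add: cinner_swap[of "A *v v" v] \<mu>_def)
    finally show ?thesis .
  qed
  then have ImMu: "Im \<mu> = 0" by (metis Reals_cnj_iff complex_is_Real_iff)
  show ?thesis
  proof (intro exI[of _ v] conjI)
    show "cinner v v = 1" by (rule cvv)
    show "\<forall>f\<in>F. cinner f v = 0" using vS by (simp add: S_def)
    show "A *v v = cinner v (A *v v) *s v" using eigv by (simp only: \<mu>_def)
    show "Im (cinner v (A *v v)) = 0" using ImMu by (simp only: \<mu>_def)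
  qed
qed

lemma eig_sets:
  fixes A :: "complex^'n^'n"
  assumes herm: "cadj A = A"
  shows "m \<le> CARD('n) \<Longrightarrow> \<exists>F. finite F \<and> card F = m \<and>
     (\<forall>f\<in>F. cinner f f = 1 \<and> (\<exists>l::real. A *v f = of_real l *s f)) \<and>
     (\<forall>f\<in>F. \<forall>g\<in>F. f \<noteq> g \<longrightarrow> cinner f g = 0)"
proof (induction m)
  case 0
  then show ?case by (intro exI[of _ "{}"]) auto
next
  case (Suc m)
  then obtain F where F: "finite F" "card F = m" "\<forall>f\<in>F. cinner f f = 1 \<and> (\<exists>l::real. A *v f = of_real l *s f)"
     "\<forall>f\<in>F. \<forall>g\<in>F. f \<noteq> g \<longrightarrow> cinner f g = 0" by auto
  have "\<forall>f\<in>F. \<exists>c. A *v f = c *s f" using F(3) by blast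
  then obtain v where v: "cinner v v = 1" "\<forall>f\<in>F. cinner f v = 0" "A *v v = cinner v (A *v v) *s v"
     "Im (cinner v (A *v v)) = 0"
    using eig_step[OF herm F(1)] F(2) Suc.prems by auto
  have vF: "v \<notin> F" using v(1,2) by auto
  have rr: "of_real (Re (cinner v (A *v v))) = cinner v (A *v v)"
    using v(4) by (simp add: complex_eq_iff)
  have ev: "A *v v = of_real (Re (cinner v (A *v v))) *s v"
    unfolding rr by (rule v(3))
  have vf: "cinner v f = 0" if "f \<in> F" for f
    using v(2) that cinner_swap[of v f] by simp
  show ?case
  proof (intro exI[of _ "insert v F"] conjI)
    show "finite (insert v F)" using F(1) by simp
    show "card (insert v F) = Suc m" using F(1,2) vF by simp
    show "\<forall>f\<in>insert v F. cinner f f = 1 \<and> (\<exists>l::real. A *v f = of_real l *s f)"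
      using F(3) v(1) ev by blast
    show "\<forall>f\<in>insert v F. \<forall>g\<in>insert v F. f \<noteq> g \<longrightarrow> cinner f g = 0"
      using F(4) v(2) vf by blast
  qed
qed

lemma spectral:
  fixes A :: "complex^'n^'n"
  assumes herm: "cadj A = A"
  shows "\<exists>g::'n \<Rightarrow> complex^'n. \<exists>l::'n \<Rightarrow> real.
     (\<forall>k k'. cinner (g k) (g k') = (if k = k' then 1 else 0)) \<and> (\<forall>k. A *v g k = of_real (l k) *s g k)"
proof -
  obtain F where F: "finite F" "card F = CARD('n)" "\<forall>f\<in>F. cinner f f = 1 \<and> (\<exists>l::real. A *v f = of_real l *s f)"
     "\<forall>f\<in>F. \<forall>g\<in>F. f \<noteq> g \<longrightarrow> cinner f g = 0"
    using eig_sets[OF herm, of "CARD('n)"] by auto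
  obtain g where g: "bij_betw g (UNIV::'n set) F"
    using finite_same_card_bij[of "UNIV::'n set" F] F(1,2) by auto
  have gF: "g k \<in> F" for k using g by (auto simp: bij_betw_def)
  have ginj: "g k = g k' \<Longrightarrow> k = k'" for k k' using g by (auto simp: bij_betw_def inj_on_def)
  define l where "l k = (SOME l::real. A *v g k = of_real l *s g k)" for k
  have "A *v g k = of_real (l k) *s g k" for k
    unfolding l_def using F(3) gF[of k] by (metis (mono_tags, lifting) someI_ex)
  moreover have "cinner (g k) (g k') = (if k = k' then 1 else 0)" for k k'
  proof (cases "k = k'")
    case True then show ?thesis using F(3) gF by auto
  next
    case False then have "g k \<noteq> g k'" using ginj by blast
    then show ?thesis using F(4) gF False by auto
  qed
  ultimately show ?thesis by blast
qed

lemma pair_cases: "(p::2\<times>2) = (1,1) \<or> p = (1,2) \<or> p = (2,1) \<or> p = (2,2)"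
  using exhaust_2[of "fst p"] exhaust_2[of "snd p"] by (cases p) auto

definition bell :: qqmat where
  "bell = (\<chi> p k. let s = complex_of_real (1 / sqrt 2) in
     if k = (1,1) then (if p = (1,1) \<or> p = (2,2) then s else 0)
     else if k = (1,2) then (if p = (1,1) then s else if p = (2,2) then - s else 0)
     else if k = (2,1) then (if p = (1,2) \<or> p = (2,1) then s else 0)
     else (if p = (1,2) then s else if p = (2,1) then - s else 0))"

definition diagm :: "(2\<times>2 \<Rightarrow> real) \<Rightarrow> qqmat" where
  "diagm l = (\<chi> k k'. if k = k' then complex_of_real (l k) else 0)"

definition bd :: "(2\<times>2 \<Rightarrow> real) \<Rightarrow> qqmat" where
  "bd l = (\<chi> p q.
     if (p = (1,1) \<and> q = (1,1)) \<or> (p = (2,2) \<and> q = (2,2)) then complex_of_real ((l (1,1) + l (1,2)) / 2)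
     else if (p = (1,1) \<and> q = (2,2)) \<or> (p = (2,2) \<and> q = (1,1)) then complex_of_real ((l (1,1) - l (1,2)) / 2)
     else if (p = (1,2) \<and> q = (1,2)) \<or> (p = (2,1) \<and> q = (2,1)) then complex_of_real ((l (2,1) + l (2,2)) / 2)
     else if (p = (1,2) \<and> q = (2,1)) \<or> (p = (2,1) \<and> q = (1,2)) then complex_of_real ((l (2,1) - l (2,2)) / 2)
     else 0)"

lemma sq2: "complex_of_real (1 / sqrt 2) * complex_of_real (1 / sqrt 2) = 1/2"
  by (simp flip: of_real_mult)

lemma sq2': "complex_of_real (sqrt 2) * complex_of_real (sqrt 2) = 2"
  by (simp flip: of_real_mult)

lemma bell_unit1: "bell ** cadj bell = mat 1"
proof -
  have "(\<Sum>k\<in>UNIV. bell $ p $ k * cnj (bell $ q $ k)) = (if p = q then 1 else 0)" for p q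
    using pair_cases[of p] pair_cases[of q]
    by (auto simp: sum_22 bell_def Let_def sq2 sq2')
  then show ?thesis by (simp add: vec_eq_iff matrix_matrix_mult_def cadj_def mat_def)
qed

lemma bell_unitary: "unitary_mat bell"
  using bell_unit1 matrix_left_right_inverse by (auto simp: unitary_mat_def)

lemma bell_bd: "bell ** diagm l ** cadj bell = bd l"
proof -
  have "(bell ** diagm l ** cadj bell) $ p $ q = (\<Sum>k\<in>UNIV. bell $ p $ k * complex_of_real (l k) * cnj (bell $ q $ k))" for p q
    by (simp add: matrix_matrix_mult_def diagm_def cadj_def if_distrib cong: if_cong)
  moreover have "(\<Sum>k\<in>UNIV. bell $ p $ k * complex_of_real (l k) * cnj (bell $ q $ k)) = bd l $ p $ q" for p q
    using pair_cases[of p] pair_cases[of q]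
    by (auto simp: sum_22 bell_def bd_def Let_def sq2 sq2' algebra_simps)
  ultimately show ?thesis by (simp add: vec_eq_iff)
qed

definition tt :: "(2\<times>2 \<Rightarrow> real) \<Rightarrow> 3 \<Rightarrow> real" where
  "tt l j = (if j = 1 then l (1,1) - l (1,2) + l (2,1) - l (2,2)
     else if j = 2 then - l (1,1) + l (1,2) + l (2,1) - l (2,2)
     else l (1,1) + l (1,2) - l (2,1) - l (2,2))"

lemma cc_bd_j0: "cc (bd l) (Some j) None = 0"
  using exhaust_3[of j]
  by (auto simp: cc_expand sum_22 bd_def pl_vals pauli_vals mat1_vals field_simps)

lemma cc_bd_0k: "cc (bd l) None (Some k) = 0"
  using exhaust_3[of k]
  by (auto simp: cc_expand sum_22 bd_def pl_vals pauli_vals mat1_vals field_simps)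

lemma cc_bd_jk: "cc (bd l) (Some j) (Some k) = (if j = k then complex_of_real (tt l j) else 0)"
  using exhaust_3[of j] exhaust_3[of k]
  by (auto simp: cc_expand sum_22 bd_def pl_vals pauli_vals mat1_vals tt_def)

lemma three_elems:
  fixes p q :: 3
  assumes "p \<noteq> q"
  obtains r where "r \<noteq> p" "r \<noteq> q" "\<And>k. k = p \<or> k = q \<or> k = r"
proof -
  have "card {p, q} = 2" using assms by simp
  then have "{p, q} \<noteq> (UNIV :: 3 set)" by auto
  then obtain r where r: "r \<notin> {p, q}" by auto
  have "k = p \<or> k = q \<or> k = r" for k
  proof (rule ccontr)
    assume "\<not> (k = p \<or> k = q \<or> k = r)"
    then have "card {p, q, r, k} = 4" using r assms by auto
    moreover have "card {p, q, r, k} \<le> CARD(3)" by (rule card_mono) auto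
    ultimately show False by simp
  qed
  then show ?thesis using that r by blast
qed

lemma sum3_pqr:
  fixes p q r :: 3
  assumes "p \<noteq> q" "r \<noteq> p" "r \<noteq> q" "\<And>k. k = p \<or> k = q \<or> k = r"
  shows "(\<Sum>k\<in>UNIV. f k) = f p + f q + (f r :: real)"
proof -
  have U: "UNIV = {p, q, r}" using assms(4) by auto
  show ?thesis unfolding U using assms(1-3) by (simp add: add.commute add.left_commute)
qed

lemma equalizer:
  fixes a :: "3 \<Rightarrow> real"
  shows "\<exists>v :: 3 \<Rightarrow> real^3. (\<forall>i. norm (v i) = 1) \<and> (\<forall>i j. i \<noteq> j \<longrightarrow> v i \<bullet> v j = 0) \<and>
     (\<forall>i. (\<Sum>k\<in>UNIV. a k * (v i $ k)\<^sup>2) = (\<Sum>k\<in>UNIV. a k) / 3)"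
proof -
  define m where "m = (\<Sum>k\<in>UNIV. a k) / 3"
  have "Max (range a) \<in> range a" by (rule Max_in) auto
  then obtain p where p: "a p = Max (range a)" by (metis imageE)
  have pmax: "a k \<le> a p" for k using p by simp
  have "Min (range a) \<in> range a" by (rule Min_in) auto
  then obtain q where q: "a q = Min (range a)" by (metis imageE)
  have qmin: "a q \<le> a k" for k using q by simp
  have mp: "m \<le> a p"
  proof -
    have "(\<Sum>k\<in>UNIV. a k) \<le> (\<Sum>k\<in>(UNIV::3 set). a p)" by (rule sum_mono) (rule pmax)
    then show ?thesis by (simp add: m_def)
  qed
  have mq: "a q \<le> m"
  proof -
    have "(\<Sum>k\<in>(UNIV::3 set). a q) \<le> (\<Sum>k\<in>UNIV. a k)" by (rule sum_mono) (rule qmin)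
    then show ?thesis by (simp add: m_def)
  qed
  show ?thesis
  proof (cases "a p = a q")
    case True
    then have aeq: "a k = a p" for k using pmax qmin by (metis antisym)
    define v :: "3 \<Rightarrow> real^3" where "v i = (\<chi> k. if k = i then 1 else 0)" for i
    have "norm (v i) = 1" for i
      by (simp add: norm_eq_1 inner_vec_def v_def if_distrib cong: if_cong)
    moreover have "v i \<bullet> v j = 0" if "i \<noteq> j" for i j
    proof -
      have "\<forall>k. (v i $ k) \<bullet> (v j $ k) = 0" using that by (simp add: v_def)
      then show ?thesis unfolding inner_vec_def by (simp add: sum.neutral)
    qed
    moreover have "(\<Sum>k\<in>UNIV. a k * (v i $ k)\<^sup>2) = m" for i
    proof -
      have "(\<Sum>k\<in>UNIV. a k * (v i $ k)\<^sup>2) = (\<Sum>k\<in>UNIV. if k = i then a i else 0)"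
        by (rule sum.cong) (auto simp: v_def)
      also have "\<dots> = a i" by simp
      also have "\<dots> = m"
      proof -
        have "(\<Sum>k\<in>UNIV. a k) = (\<Sum>k\<in>(UNIV::3 set). a i)"
          by (rule sum.cong) (auto intro: trans[OF aeq aeq[symmetric]])
        then show ?thesis by (simp add: m_def)
      qed
      finally show ?thesis .
    qed
    ultimately show ?thesis unfolding m_def by blast
  next
    case False
    then have pq: "p \<noteq> q" by auto
    have lt: "a q < a p" using False pmax[of q] by simp
    obtain r where r: "r \<noteq> p" "r \<noteq> q" "\<And>k. k = p \<or> k = q \<or> k = r" using three_elems[OF pq] by blast
    have S: "(\<Sum>k\<in>UNIV. f k) = f p + f q + (f r :: real)" for f
      by (rule sum3_pqr[OF pq r])
    define x where "x = (m - a q) / (a p - a q)"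
    have x0: "0 \<le> x" using mq lt by (simp add: x_def)
    have x1: "x \<le> 1" using mp lt by (simp add: x_def)
    have xe: "x * (a p - a q) = m - a q" using lt by (simp add: x_def)
    define c1 where "c1 = sqrt x"
    define c2 where "c2 = sqrt (1 - x)"
    have c1s: "c1\<^sup>2 = x" using x0 by (simp add: c1_def)
    have c2s: "c2\<^sup>2 = 1 - x" using x1 by (simp add: c2_def)
    have s2: "(sqrt 2)\<^sup>2 = (2::real)" by simp
    define v1 :: "real^3" where "v1 = (\<chi> k. if k = p then c1 else if k = q then c2 else 0)"
    define v2 :: "real^3" where "v2 = (\<chi> k. (if k = p then - c2 else if k = q then c1 else 1) / sqrt 2)"
    define v3 :: "real^3" where "v3 = (\<chi> k. (if k = p then - c2 else if k = q then c1 else -1) / sqrt 2)"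
    have pv: "(v1 $ p = c1) \<and> (v1 $ q = c2) \<and> (v1 $ r = 0)" using pq r by (simp add: v1_def)
    have pv2: "(v2 $ p = - c2 / sqrt 2) \<and> (v2 $ q = c1 / sqrt 2) \<and> (v2 $ r = 1 / sqrt 2)" using pq r by (simp add: v2_def)
    have pv3: "(v3 $ p = - c2 / sqrt 2) \<and> (v3 $ q = c1 / sqrt 2) \<and> (v3 $ r = - 1 / sqrt 2)" using pq r by (simp add: v3_def)
    have i11: "v1 \<bullet> v1 = 1" using c1s c2s
      by (simp add: inner_vec_def S pv power2_eq_square)
    have i22: "v2 \<bullet> v2 = 1" using c1s c2s
      by (simp add: inner_vec_def S pv2 power2_eq_square field_simps)
    have i33: "v3 \<bullet> v3 = 1" using c1s c2s
      by (simp add: inner_vec_def S pv3 power2_eq_square field_simps)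
    have i12: "v1 \<bullet> v2 = 0"
      by (simp add: inner_vec_def S pv pv2 field_simps)
    have i13: "v1 \<bullet> v3 = 0"
      by (simp add: inner_vec_def S pv pv3 field_simps)
    have i23: "v2 \<bullet> v3 = 0" using c1s c2s
      by (simp add: inner_vec_def S pv2 pv3 power2_eq_square field_simps)
    have ar: "a r = 3 * m - a p - a q" by (simp add: m_def S field_simps)
    have e1: "(\<Sum>k\<in>UNIV. a k * (v1 $ k)\<^sup>2) = m"
      using xe by (simp add: S pv c1s c2s algebra_simps)
    have e2: "(\<Sum>k\<in>UNIV. a k * (v2 $ k)\<^sup>2) = m"
      using xe by (simp add: S pv2 power_divide c1s c2s ar field_simps)
    have e3: "(\<Sum>k\<in>UNIV. a k * (v3 $ k)\<^sup>2) = m"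
      using xe by (simp add: S pv3 power_divide c1s c2s ar field_simps)
    define v :: "3 \<Rightarrow> real^3" where "v i = (if i = 1 then v1 else if i = 2 then v2 else v3)" for i
    have "norm (v i) = 1" for i
      using i11 i22 i33 by (simp add: v_def norm_eq_1)
    moreover have "v i \<bullet> v j = 0" if "i \<noteq> j" for i j
      using that i12 i13 i23 exhaust_3[of i] exhaust_3[of j]
      by (auto simp: v_def inner_commute)
    moreover have "(\<Sum>k\<in>UNIV. a k * (v i $ k)\<^sup>2) = m" for i
      using e1 e2 e3 by (simp add: v_def)
    ultimately show ?thesis unfolding m_def by blast
  qed
qed

lemma to_bell:
  fixes \<sigma> :: qqmat
  assumes herm: "cadj \<sigma> = \<sigma>"
  shows "\<exists>U l. unitary_mat U \<and> U ** \<sigma> ** cadj U = bd l"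
proof -
  obtain g :: "2\<times>2 \<Rightarrow> complex^(2\<times>2)" and l :: "2\<times>2 \<Rightarrow> real" where
    g: "\<forall>k k'. cinner (g k) (g k') = (if k = k' then 1 else 0)" "\<forall>k. \<sigma> *v g k = of_real (l k) *s g k"
    using spectral[OF herm] by blast
  define Wm :: qqmat where "Wm = (\<chi> i k. g k $ i)"
  have WW: "cadj Wm ** Wm = mat 1"
  proof -
    have "(cadj Wm ** Wm) $ k $ k' = cinner (g k) (g k')" for k k'
      by (simp add: Wm_def cadj_def matrix_matrix_mult_def cinner_def)
    then show ?thesis using g(1) by (simp add: vec_eq_iff mat_def)
  qed
  then have WW': "Wm ** cadj Wm = mat 1" by (simp add: matrix_left_right_inverse)
  have D: "cadj Wm ** \<sigma> ** Wm = diagm l"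
  proof -
    have "(cadj Wm ** \<sigma> ** Wm) $ k $ k' = cinner (g k) (\<sigma> *v g k')" for k k'
    proof -
      have "(cadj Wm ** \<sigma> ** Wm) $ k $ k' = (\<Sum>j\<in>UNIV. \<Sum>i\<in>UNIV. cnj (g k $ i) * \<sigma> $ i $ j * g k' $ j)"
        by (simp add: Wm_def cadj_def matrix_matrix_mult_def sum_distrib_right)
      also have "\<dots> = (\<Sum>i\<in>UNIV. \<Sum>j\<in>UNIV. cnj (g k $ i) * \<sigma> $ i $ j * g k' $ j)" by (rule sum.swap)
      also have "\<dots> = cinner (g k) (\<sigma> *v g k')"
        by (simp add: cinner_def matrix_vector_mult_def sum_distrib_left mult_ac)
      finally show ?thesis .
    qed
    then show ?thesis using g by (simp add: vec_eq_iff diagm_def cinner_smult_right)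
  qed
  define U where "U = bell ** cadj Wm"
  have cU: "cadj U = Wm ** cadj bell" by (simp add: U_def cadj_mult cadj_cadj)
  have bu: "bell ** cadj bell = mat 1" "cadj bell ** bell = mat 1"
    using bell_unitary by (auto simp: unitary_mat_def)
  have "U ** cadj U = bell ** (cadj Wm ** Wm) ** cadj bell"
    unfolding cU by (simp add: U_def matrix_mul_assoc)
  also have "\<dots> = mat 1" using WW bu by simp
  finally have u1: "U ** cadj U = mat 1" .
  have "cadj U ** U = Wm ** (cadj bell ** bell) ** cadj Wm"
    unfolding cU by (simp add: U_def matrix_mul_assoc)
  also have "\<dots> = mat 1" using WW' bu by simp
  finally have u2: "cadj U ** U = mat 1" .
  have "U ** \<sigma> ** cadj U = bell ** (cadj Wm ** \<sigma> ** Wm) ** cadj bell"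
    unfolding cU by (simp add: U_def matrix_mul_assoc)
  also have "\<dots> = bd l" using D bell_bd by simp
  finally show ?thesis using u1 u2 by (auto simp: unitary_mat_def)
qed

lemma sum_cc_bd: "(\<Sum>a\<in>UNIV. \<Sum>b\<in>UNIV. (cmod (cc (bd l) a b))\<^sup>2) =
   (cmod (cc (bd l) None None))\<^sup>2 + (\<Sum>j\<in>UNIV. (tt l j)\<^sup>2)"
proof -
  have "(\<Sum>j\<in>UNIV. \<Sum>k\<in>UNIV. (cmod (cc (bd l) (Some j) (Some k)))\<^sup>2) = (\<Sum>j\<in>UNIV. (tt l j)\<^sup>2)"
  proof (rule sum.cong[OF refl])
    fix j
    have "(\<Sum>k\<in>UNIV. (cmod (cc (bd l) (Some j) (Some k)))\<^sup>2) = (\<Sum>k\<in>UNIV. if k = j then (tt l j)\<^sup>2 else 0)"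
      by (rule sum.cong[OF refl]) (auto simp: cc_bd_jk)
    then show "(\<Sum>k\<in>UNIV. (cmod (cc (bd l) (Some j) (Some k)))\<^sup>2) = (tt l j)\<^sup>2" by simp
  qed
  then show ?thesis by (simp add: sum_opt cc_bd_j0 cc_bd_0k sum.distrib)
qed

theorem mainTheorem6:
  fixes \<sigma> :: qqmat and e f :: "real^3" and G :: "real^3^3"
  assumes "density_mat \<sigma>"
    and "\<sigma> = two_qubit_repr e f G"
  shows "\<sigma> \<in> AUS3 \<longleftrightarrow>
    (1 + (norm e)\<^sup>2 + (norm f)\<^sup>2 + (\<Sum>i\<in>UNIV. \<Sum>j\<in>UNIV. (G $ i $ j)\<^sup>2)) / 4 \<le> 1 / 2"
proof -
  have dens: "density_mat \<sigma>" by fact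
  have herm: "cadj \<sigma> = \<sigma>" and tr: "trace \<sigma> = 1"
    using dens by (auto simp: density_mat_def hermitian_mat_def)
  have P: "4 * fro \<sigma> = 1 + (norm e)\<^sup>2 + (norm f)\<^sup>2 + (\<Sum>i\<in>UNIV. \<Sum>j\<in>UNIV. (G $ i $ j)\<^sup>2)"
    using fro_repr assms(2) by simp
  have "\<sigma> \<in> AUS3 \<longleftrightarrow> 4 * fro \<sigma> \<le> 2"
  proof
    assume A: "\<sigma> \<in> AUS3"
    show "4 * fro \<sigma> \<le> 2"
    proof (rule ccontr)
      assume "\<not> 4 * fro \<sigma> \<le> 2"
      then have big: "4 * fro \<sigma> > 2" by simp
      obtain U l where U: "unitary_mat U" and R: "U ** \<sigma> ** cadj U = bd l"
        using to_bell[OF herm] by blast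
      define t where "t = tt l"
      have trR: "trace (bd l) = 1" using trace_unitary[OF U, of \<sigma>] R tr by simp
      have froR: "fro (bd l) = fro \<sigma>" using fro_unitary[OF U, of \<sigma>] R by simp
      have "(\<Sum>a\<in>UNIV. \<Sum>b\<in>UNIV. (cmod (cc (bd l) a b))\<^sup>2) = 4 * fro \<sigma>"
        using parseval[of "bd l"] froR by simp
      then have "1 + (\<Sum>j\<in>UNIV. (t j)\<^sup>2) = 4 * fro \<sigma>"
        using sum_cc_bd[of l] by (simp add: cc_NN trR t_def)
      then have tbig: "(\<Sum>j\<in>UNIV. (t j)\<^sup>2) > 1" using big by simp
      define m where "m = (\<Sum>j\<in>UNIV. (t j)\<^sup>2) / 3"
      have mpos: "m > 0" using tbig by (simp add: m_def)
      obtain v :: "3 \<Rightarrow> real^3" where vn: "\<forall>i. norm (v i) = 1" and vo: "\<forall>i j. i \<noteq> j \<longrightarrow> v i \<bullet> v j = 0"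
        and ve: "\<forall>i. (\<Sum>k\<in>UNIV. (t k)\<^sup>2 * (v i $ k)\<^sup>2) = m"
        using equalizer[of "\<lambda>k. (t k)\<^sup>2"] unfolding m_def by blast
      define u :: "3 \<Rightarrow> real^3" where "u i = (\<chi> j. t j * v i $ j / sqrt m)" for i
      have un: "norm (u i) = 1" for i
      proof -
        have "u i \<bullet> u i = (\<Sum>k\<in>UNIV. (t k)\<^sup>2 * (v i $ k)\<^sup>2) / m"
          using mpos by (simp add: u_def inner_vec_def power2_eq_square sum_divide_distrib mult_ac)
        also have "\<dots> = 1" using ve mpos by simp
        finally show ?thesis by (simp add: norm_eq_1)
      qed
      have inner_i: "(\<Sum>j\<in>UNIV. u i $ j * v i $ j * t j) = sqrt m" for i
      proof -
        have "(\<Sum>j\<in>UNIV. u i $ j * v i $ j * t j) = (\<Sum>k\<in>UNIV. (t k)\<^sup>2 * (v i $ k)\<^sup>2) / sqrt m"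
          by (simp add: u_def power2_eq_square sum_divide_distrib mult_ac)
        also have "\<dots> = m / sqrt m" using ve by simp
        also have "\<dots> = sqrt m" using mpos by (simp add: real_div_sqrt)
        finally show ?thesis .
      qed
      have expr: "(\<Sum>i\<in>UNIV. trace (U ** \<sigma> ** cadj U ** kron (bloch (u i)) (bloch (v i))))
          = complex_of_real (3 * sqrt m)"
      proof -
        have "(\<Sum>i\<in>UNIV. trace (U ** \<sigma> ** cadj U ** kron (bloch (u i)) (bloch (v i))))
          = (\<Sum>i\<in>UNIV. \<Sum>j\<in>UNIV. \<Sum>k\<in>UNIV. complex_of_real (u i $ j * v i $ k) * cc (bd l) (Some j) (Some k))"
          unfolding R trace_bloch ..
        also have "\<dots> = (\<Sum>i\<in>UNIV. \<Sum>j\<in>UNIV. complex_of_real (u i $ j * v i $ j * t j))"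
        proof (intro sum.cong refl)
          fix i j
          have "(\<Sum>k\<in>UNIV. complex_of_real (u i $ j * v i $ k) * cc (bd l) (Some j) (Some k))
             = (\<Sum>k\<in>UNIV. if k = j then complex_of_real (u i $ j * v i $ j * t j) else 0)"
            by (rule sum.cong[OF refl]) (auto simp: cc_bd_jk t_def)
          then show "(\<Sum>k\<in>UNIV. complex_of_real (u i $ j * v i $ k) * cc (bd l) (Some j) (Some k))
             = complex_of_real (u i $ j * v i $ j * t j)" by simp
        qed
        also have "\<dots> = complex_of_real (\<Sum>i\<in>UNIV. \<Sum>j\<in>UNIV. u i $ j * v i $ j * t j)" by simp
        also have "\<dots> = complex_of_real (3 * sqrt m)" by (simp add: inner_i)
        finally show ?thesis .
      qed
      have "1 / sqrt 3 * cmod (\<Sum>i\<in>UNIV. trace (U ** \<sigma> ** cadj U ** kron (bloch (u i)) (bloch (v i)))) \<le> 1"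
        using A U un vn vo unfolding AUS3_def by blast
      then have h1: "1 / sqrt 3 * (3 * sqrt m) \<le> 1" using expr mpos by simp
      have h2: "1 / sqrt 3 * (3 * sqrt m) = sqrt (3 * m)"
      proof -
        have "3 = sqrt 3 * sqrt (3::real)" by simp
        then have "1 / sqrt 3 * (3 * sqrt m) = sqrt 3 * sqrt m" by (metis divide_self_if mult.assoc mult_1_left nonzero_mult_div_cancel_left times_divide_eq_left real_sqrt_eq_zero_cancel_iff zero_neq_numeral)
        then show ?thesis by (simp add: real_sqrt_mult)
      qed
      have h3: "sqrt (3 * m) > 1" using tbig by (simp add: m_def)
      show False using h1 h2 h3 by linarith
    qed
  next
    assume small: "4 * fro \<sigma> \<le> 2"
    show "\<sigma> \<in> AUS3"
      unfolding AUS3_def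
    proof (intro CollectI conjI allI impI dens)
      fix U :: qqmat and u v :: "3 \<Rightarrow> real^3"
      assume H: "unitary_mat U \<and> (\<forall>i. norm (u i) = 1) \<and> (\<forall>i. norm (v i) = 1) \<and>
        (\<forall>i j. i \<noteq> j \<longrightarrow> v i \<bullet> v j = 0)"
      then have U: "unitary_mat U" by blast
      define R where "R = U ** \<sigma> ** cadj U"
      have froR: "4 * fro R \<le> 2" using fro_unitary[OF U, of \<sigma>] small by (simp add: R_def)
      have trR: "trace R = 1" using trace_unitary[OF U, of \<sigma>] tr by (simp add: R_def)
      have "cmod (\<Sum>i\<in>UNIV. trace (U ** \<sigma> ** cadj U ** kron (bloch (u i)) (bloch (v i)))) \<le> sqrt 3"
        unfolding R_def[symmetric] trace_bloch
        using aus_bound[OF froR trR] H by blast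
      then show "1 / sqrt 3 * cmod (\<Sum>i\<in>UNIV. trace (U ** \<sigma> ** cadj U ** kron (bloch (u i)) (bloch (v i)))) \<le> 1"
        by (simp add: divide_le_eq)
    qed
  qed
  then have X: "\<sigma> \<in> AUS3 \<longleftrightarrow> fro \<sigma> \<le> 1 / 2" by linarith
  have eq: "(1 + (norm e)\<^sup>2 + (norm f)\<^sup>2 + (\<Sum>i\<in>UNIV. \<Sum>j\<in>UNIV. (G $ i $ j)\<^sup>2)) / 4 = fro \<sigma>"
    using P by simp
  show ?thesis unfolding eq by (rule X)
qed

end
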